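(* Let $F:\mathbb{N}\to\mathbb{R}$ be a function such that (a) $F$ is weakly monotonically increasing; (b) $F(q)\to\infty$ as $q\to\infty$; and (c) $q/F(q)\to\infty$ as $q\to\infty$. For each natural number $q$, let $Z_F(q)$ be the number of positive divisors $d$ of $q$ with $d<\sqrt{F(q)}$, minus the number of positive divisors $d$ of $q$ with $\sqrt{F(q)}\le d< F(q)$. Then $$\lim_{B\to\infty}\frac{1}{B}\sum_{q=1}^{B} Z_F(q)=\gamma .$$
   Context: $\gamma$ denotes the Euler–Mascheroni constant, $\gamma=\lim_{n\to\infty}\left(\sum_{k=1}^n \frac1k-\ln n\right)$. $\mathbb{N}=\{1,2,3,\dots\}$. *)

theory Defs
  imports "HOL-Analysis.Analysis"
begin

definition Z :: "(nat \<Rightarrow> real) \<Rightarrow> nat \<Rightarrow> int" where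
  "Z F q = int (card {d::nat. d > 0 \<and> d dvd q \<and> real d < sqrt (F q)})
         - int (card {d::nat. d > 0 \<and> d dvd q \<and> sqrt (F q) \<le> real d \<and> real d < F q})"

end

theory Submission
  imports Defs
begin

lemma count_mult:
  assumes "d > 0" shows "(\<Sum>q=1..n. of_bool (d dvd q) :: real) = real (n div d)"
proof (induction n)
  case 0 show ?case by simp
next
  case (Suc n)
  have "(\<Sum>q=1..Suc n. of_bool (d dvd q) :: real) = real (n div d) + of_bool (d dvd Suc n)"
    using Suc by simp
  also have "\<dots> = real (Suc n div d)" by (simp add: div_Suc dvd_eq_mod_eq_0)
  finally show ?case .
qed

lemma D_bounds:
  assumes d: "d > 0"
  shows "real (n div d) - real n / real d \<le> 0" "real (n div d) - real n / real d > -1"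
proof -
  have e0: "d * (n div d) + n mod d = n" by (rule mult_div_mod_eq)
  have e: "real d * real (n div d) + real (n mod d) = real n"
    using arg_cong[OF e0, of real] by (simp only: of_nat_add of_nat_mult)
  have m: "real (n mod d) < real d" using d by simp
  have "real n / real d = (real d * real (n div d) + real (n mod d)) / real d" by (simp only: e)
  also have "\<dots> = real (n div d) + real (n mod d) / real d" using d by (simp add: add_divide_distrib)
  finally have "real n / real d = real (n div d) + real (n mod d) / real d" .
  moreover have "0 \<le> real (n mod d) / real d" by simp
  moreover have "real (n mod d) / real d < 1" using m d by simp
  ultimately show "real (n div d) - real n / real d \<le> 0" "real (n div d) - real n / real d > -1"
    by linarith+
qed

lemma sum_f:
  assumes d: "d > 0"
  shows "(\<Sum>q=1..n. (of_bool (d dvd q) - 1 / real d :: real)) = real (n div d) - real n / real d"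
  using count_mult[OF d, of n] by (simp add: sum_subtractf)

lemma disc:
  assumes d: "d > 0" and up: "\<And>m n. 1 \<le> m \<Longrightarrow> m \<le> n \<Longrightarrow> P m \<Longrightarrow> P n"
  shows "\<bar>\<Sum>q=1..B. (of_bool (d dvd q) - 1 / real d) * of_bool (P q)\<bar> \<le> 1"
proof (cases "\<exists>q\<in>{1..B}. P q")
  case False
  then have "(\<Sum>q=1..B. (of_bool (d dvd q) - 1 / real d) * of_bool (P q)) = 0"
    by (intro sum.neutral) auto
  then show ?thesis by simp
next
  case True
  define t where "t = (LEAST q. 1 \<le> q \<and> P q)"
  from True obtain q0 where q0: "q0 \<in> {1..B}" "P q0" by blast
  have t1: "1 \<le> t \<and> P t" unfolding t_def by (rule LeastI[of _ q0]) (use q0 in auto)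
  have tq0: "t \<le> q0" unfolding t_def by (rule Least_le) (use q0 in auto)
  have iff: "P q \<longleftrightarrow> t \<le> q" if q: "q \<in> {1..B}" for q
  proof
    assume "P q" then show "t \<le> q" unfolding t_def by (intro Least_le) (use q in auto)
  next
    assume "t \<le> q" then show "P q" using up[of t q] t1 by auto
  qed
  define f where "f q = (of_bool (d dvd q) - 1 / real d :: real)" for q
  have split: "{1..B} = {1..t-1} \<union> {t..B}" using t1 tq0 q0 by auto
  have disj: "{1..t-1} \<inter> {t..B} = {}" using t1 by auto
  have "(\<Sum>q=1..B. f q * of_bool (P q)) = (\<Sum>q=1..B. f q * of_bool (t \<le> q))"
    by (rule sum.cong) (auto simp: iff)
  also have "\<dots> = (\<Sum>q=1..t-1. f q * of_bool (t \<le> q)) + (\<Sum>q=t..B. f q * of_bool (t \<le> q))"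
    by (subst split, rule sum.union_disjoint) (use disj in auto)
  also have "\<dots> = (\<Sum>q=t..B. f q)"
  proof -
    have "(\<Sum>q=1..t-1. f q * of_bool (t \<le> q)) = 0" by (intro sum.neutral) auto
    moreover have "(\<Sum>q=t..B. f q * of_bool (t \<le> q)) = (\<Sum>q=t..B. f q)" by (intro sum.cong) auto
    ultimately show ?thesis by simp
  qed
  also have "(\<Sum>q=1..B. f q) = (\<Sum>q=1..t-1. f q) + (\<Sum>q=t..B. f q)"
    by (subst split, rule sum.union_disjoint) (use disj in auto)
  hence "(\<Sum>q=t..B. f q) = (\<Sum>q=1..B. f q) - (\<Sum>q=1..t-1. f q)" by simp
  finally have eq: "(\<Sum>q=1..B. f q * of_bool (P q)) =
     (real (B div d) - real B / real d) - (real ((t-1) div d) - real (t-1) / real d)"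
    unfolding f_def using sum_f[OF d] by simp
  show ?thesis using eq D_bounds[OF d, of B] D_bounds[OF d, of "t-1"] unfolding f_def by linarith
qed

definition K :: "real \<Rightarrow> nat" where "K y = nat \<lceil>y\<rceil> - 1"

lemma nat_m1: "c \<ge> 1 \<Longrightarrow> real (nat c - 1) = real_of_int c - 1"
proof -
  assume c: "c \<ge> 1"
  then have "1 \<le> nat c" by simp
  then have "real (nat c - 1) = real (nat c) - 1" by (simp add: of_nat_diff)
  then show ?thesis using c by simp
qed

lemma K_iff: "d \<ge> 1 \<Longrightarrow> real d < y \<longleftrightarrow> d \<le> K y"
proof -
  assume d: "d \<ge> 1"
  have "real d < y \<longleftrightarrow> int d < \<lceil>y\<rceil>" by (simp add: less_ceiling_iff)
  also have "\<dots> \<longleftrightarrow> d \<le> K y" unfolding K_def using d by linarith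
  finally show ?thesis .
qed

lemma K_le: "real (K y) \<le> max 0 y"
proof -
  have c: "of_int \<lceil>y\<rceil> - 1 < y" using ceiling_correct[of y] by linarith
  show ?thesis
  proof (cases "\<lceil>y\<rceil> \<le> 0")
    case True then show ?thesis unfolding K_def by simp
  next
    case False
    then have "real (K y) = of_int \<lceil>y\<rceil> - 1" unfolding K_def by (intro nat_m1) simp
    then show ?thesis using c by simp
  qed
qed

lemma K_ge: "y \<ge> 1 \<Longrightarrow> real (K y) \<ge> y - 1"
proof -
  assume y: "y \<ge> 1"
  then have "\<lceil>y\<rceil> \<ge> 1" by linarith
  then have "real (K y) = of_int \<lceil>y\<rceil> - 1" unfolding K_def by (intro nat_m1) simp
  then show ?thesis using ceiling_correct[of y] by linarith
qed

lemma K_mono: "y \<le> z \<Longrightarrow> K y \<le> K z"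
  unfolding K_def by (intro diff_le_mono nat_mono ceiling_mono)

lemma harm_K:
  assumes "K y \<le> N"
  shows "harm (K y) = (\<Sum>d=1..N. of_bool (real d < y) / real d)"
proof -
  have "harm (K y) = (\<Sum>d=1..K y. of_bool (real d < y) / real d)"
    unfolding harm_def by (intro sum.cong) (auto simp: K_iff divide_inverse)
  also have "\<dots> = (\<Sum>d=1..N. of_bool (real d < y) / real d)"
    by (intro sum.mono_neutral_left) (use assms in \<open>auto simp: K_iff\<close>)
  finally show ?thesis .
qed

lemma G:
  fixes T :: "nat \<Rightarrow> real"
  assumes mono: "\<And>m n. 1 \<le> m \<Longrightarrow> m \<le> n \<Longrightarrow> T m \<le> T n" and B: "B \<ge> 1"
  shows "\<bar>\<Sum>q=1..B. (real (card {d. 0<d \<and> d dvd q \<and> real d < T q}) - harm (K (T q)))\<bar> \<le> max 0 (T B)"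
proof -
  define N where "N = max B (nat \<lceil>T B\<rceil>)"
  define g where "g d q = (of_bool (d dvd q) - 1 / real d) * (of_bool (real d < T q) :: real)" for d q
  have c: "real (card {d. 0<d \<and> d dvd q \<and> real d < T q}) =
      (\<Sum>d=1..N. of_bool (d dvd q \<and> real d < T q))" if q: "q \<in> {1..B}" for q
  proof -
    have "{d. 0<d \<and> d dvd q \<and> real d < T q} = {1..N} \<inter> {d. d dvd q \<and> real d < T q}"
      using q by (auto simp: N_def dest: dvd_imp_le)
    then show ?thesis by simp
  qed
  have h: "harm (K (T q)) = (\<Sum>d=1..N. of_bool (real d < T q) / real d)" if q: "q \<in> {1..B}" for q
  proof (rule harm_K)
    have "T q \<le> T B" using q mono[of q B] by auto
    then have "K (T q) \<le> K (T B)" by (rule K_mono)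
    also have "K (T B) \<le> nat \<lceil>T B\<rceil>" unfolding K_def by simp
    finally show "K (T q) \<le> N" unfolding N_def by simp
  qed
  have "(\<Sum>q=1..B. (real (card {d. 0<d \<and> d dvd q \<and> real d < T q}) - harm (K (T q))))
      = (\<Sum>q=1..B. \<Sum>d=1..N. g d q)"
  proof (rule sum.cong[OF refl])
    fix q assume q: "q \<in> {1..B}"
    show "real (card {d. 0<d \<and> d dvd q \<and> real d < T q}) - harm (K (T q)) = (\<Sum>d=1..N. g d q)"
      unfolding c[OF q] h[OF q] g_def sum_subtractf[symmetric]
      by (intro sum.cong) (auto simp: of_bool_def)
  qed
  also have "\<dots> = (\<Sum>d=1..N. \<Sum>q=1..B. g d q)" by (rule sum.swap)
  finally have eq: "(\<Sum>q=1..B. (real (card {d. 0<d \<and> d dvd q \<and> real d < T q}) - harm (K (T q))))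
      = (\<Sum>d=1..N. \<Sum>q=1..B. g d q)" .
  have bd: "\<bar>\<Sum>q=1..B. g d q\<bar> \<le> of_bool (d \<le> K (T B))" if d: "d \<in> {1..N}" for d
  proof (cases "real d < T B")
    case True
    have "\<bar>\<Sum>q=1..B. g d q\<bar> \<le> 1" unfolding g_def
      by (rule disc) (use d mono in \<open>auto intro: less_le_trans\<close>)
    then show ?thesis using True K_iff[of d "T B"] d by simp
  next
    case False
    have "(\<Sum>q=1..B. g d q) = 0"
    proof (intro sum.neutral ballI)
      fix q assume q: "q \<in> {1..B}"
      have "T q \<le> T B" using q mono[of q B] by auto
      then show "g d q = 0" using False unfolding g_def by simp
    qed
    then show ?thesis by simp
  qed
  have "\<bar>\<Sum>d=1..N. \<Sum>q=1..B. g d q\<bar> \<le> (\<Sum>d=1..N. \<bar>\<Sum>q=1..B. g d q\<bar>)" by (rule sum_abs)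
  also have "\<dots> \<le> (\<Sum>d=1..N. of_bool (d \<le> K (T B)))" by (rule sum_mono) (rule bd)
  also have "\<dots> = real (card ({1..N} \<inter> {d. d \<le> K (T B)}))" by simp
  also have "\<dots> \<le> real (card {1..K (T B)})"
    by (intro of_nat_mono card_mono) auto
  also have "\<dots> = real (K (T B))" by simp
  also have "\<dots> \<le> max 0 (T B)" by (rule K_le)
  finally show ?thesis using eq by simp
qed

lemma cesaro0:
  fixes b :: "nat \<Rightarrow> real"
  assumes lim: "b \<longlonglongrightarrow> 0"
  shows "(\<lambda>B. (\<Sum>q=1..B. b q) / real B) \<longlonglongrightarrow> 0"
proof (unfold LIMSEQ_iff, intro allI impI)
  fix e :: real assume e: "e > 0"
  from lim e obtain N0 where N0: "\<And>q. q \<ge> N0 \<Longrightarrow> \<bar>b q\<bar> < e / 2"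
    unfolding LIMSEQ_iff by (metis half_gt_zero real_norm_def diff_zero)
  define C where "C = (\<Sum>q=1..N0. \<bar>b q\<bar>)"
  have C0: "C \<ge> 0" unfolding C_def by (intro sum_nonneg) auto
  define M where "M = Suc (nat \<lceil>2 * C / e\<rceil>)"
  show "\<exists>no. \<forall>n\<ge>no. norm ((\<Sum>q=1..n. b q) / real n - 0) < e"
  proof (intro exI allI impI)
    fix B assume B: "B \<ge> M"
    have Bpos: "real B > 0" using B unfolding M_def by simp
    have BC: "real B > 2 * C / e"
    proof -
      have "2 * C / e \<le> real (nat \<lceil>2 * C / e\<rceil>)" by linarith
      also have "\<dots> < real B" using B unfolding M_def by simp
      finally show ?thesis .
    qed
    have "\<bar>\<Sum>q=1..B. b q\<bar> \<le> (\<Sum>q=1..B. \<bar>b q\<bar>)" by (rule sum_abs)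
    also have "\<dots> \<le> (\<Sum>q=1..B. \<bar>b q\<bar> * of_bool (q < N0) + e / 2)"
    proof (rule sum_mono)
      fix q assume "q \<in> {1..B}"
      show "\<bar>b q\<bar> \<le> \<bar>b q\<bar> * of_bool (q < N0) + e / 2"
        using N0[of q] e by (cases "q < N0") auto
    qed
    also have "\<dots> = (\<Sum>q=1..B. \<bar>b q\<bar> * of_bool (q < N0)) + real B * (e / 2)"
      by (simp add: sum.distrib del: sum_mult_of_bool_eq)
    also have "(\<Sum>q=1..B. \<bar>b q\<bar> * of_bool (q < N0)) \<le> C"
    proof -
      have "(\<Sum>q=1..B. \<bar>b q\<bar> * of_bool (q < N0)) = (\<Sum>q\<in>{1..B} \<inter> {q. q < N0}. \<bar>b q\<bar>)"
        by simp
      also have "\<dots> \<le> C" unfolding C_def by (intro sum_mono2) auto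
      finally show ?thesis .
    qed
    finally have S: "\<bar>\<Sum>q=1..B. b q\<bar> \<le> C + real B * (e / 2)" by simp
    have "C < real B * (e / 2)" using BC e by (simp add: field_simps)
    with S have "\<bar>\<Sum>q=1..B. b q\<bar> < real B * e" by simp
    then show "norm ((\<Sum>q=1..B. b q) / real B - 0) < e"
      using Bpos by (simp add: abs_divide field_simps)
  qed
qed

lemma cesaro:
  fixes a :: "nat \<Rightarrow> real"
  assumes lim: "a \<longlonglongrightarrow> L"
  shows "(\<lambda>B. (\<Sum>q=1..B. a q) / real B) \<longlonglongrightarrow> L"
proof -
  have "(\<lambda>q. a q - L) \<longlonglongrightarrow> 0" using lim by (simp add: LIM_zero)
  then have "(\<lambda>B. (\<Sum>q=1..B. a q - L) / real B + L) \<longlonglongrightarrow> 0 + L"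
    by (intro tendsto_add cesaro0) auto
  moreover have "eventually (\<lambda>B. (\<Sum>q=1..B. a q - L) / real B + L = (\<Sum>q=1..B. a q) / real B) sequentially"
    using eventually_ge_at_top[of 1]
    by eventually_elim (simp add: sum_subtractf field_simps)
  ultimately show ?thesis by (simp add: tendsto_cong)
qed

lemma K_at_top: "filterlim K at_top at_top"
proof (unfold filterlim_at_top, intro allI)
  fix Z :: nat
  show "eventually (\<lambda>y. Z \<le> K y) at_top"
    using eventually_ge_at_top[of "real Z + 1"]
  proof eventually_elim
    case (elim y)
    then have "real (K y) \<ge> y - 1" by (intro K_ge) simp
    with elim have "real Z \<le> real (K y)" by simp
    then show ?case by simp
  qed
qed

lemma ln_K: "((\<lambda>y. ln (real (K y)) - ln y) \<longlongrightarrow> 0) at_top"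
proof -
  have lo: "((\<lambda>y::real. 1 - inverse y) \<longlongrightarrow> 1) at_top"
    using tendsto_diff[OF tendsto_const tendsto_inverse_0_at_top[OF filterlim_ident], of 1] by simp
  have r: "((\<lambda>y. real (K y) / y) \<longlongrightarrow> 1) at_top"
  proof (rule tendsto_sandwich[OF _ _ lo tendsto_const])
    show "eventually (\<lambda>y. 1 - inverse y \<le> real (K y) / y) at_top"
      using eventually_ge_at_top[of "2::real"]
    proof eventually_elim
      case (elim y)
      then have "real (K y) \<ge> y - 1" by (intro K_ge) simp
      then have "(y - 1) / y \<le> real (K y) / y" by (rule divide_right_mono) (use elim in simp)
      moreover have "1 - inverse y = (y - 1) / y" using elim by (simp add: field_simps)
      ultimately show ?case by simp
    qed
    show "eventually (\<lambda>y. real (K y) / y \<le> 1) at_top"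
      using eventually_ge_at_top[of "2::real"]
    proof eventually_elim
      case (elim y)
      then have "real (K y) \<le> y" using K_le[of y] by simp
      then show ?case using elim by (simp add: field_simps)
    qed
  qed
  have "((\<lambda>y. ln (real (K y) / y)) \<longlongrightarrow> ln 1) at_top" by (rule tendsto_ln[OF r]) simp
  moreover have "eventually (\<lambda>y. ln (real (K y) / y) = ln (real (K y)) - ln y) at_top"
    using eventually_ge_at_top[of "2::real"]
  proof eventually_elim
    case (elim y)
    then have "real (K y) \<ge> y - 1" by (intro K_ge) simp
    then have "real (K y) > 0" using elim by simp
    then show ?case using elim by (simp add: ln_div)
  qed
  ultimately show ?thesis by (simp add: tendsto_cong)
qed

lemma harm_K_lim: "((\<lambda>y. harm (K y) - ln y) \<longlongrightarrow> euler_mascheroni) at_top"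
proof -
  have "((\<lambda>y. harm (K y) - ln (real (K y))) \<longlongrightarrow> euler_mascheroni) at_top"
    using filterlim_compose[OF euler_mascheroni_LIMSEQ K_at_top] by simp
  from tendsto_add[OF this ln_K] show ?thesis by simp
qed

lemma g_lim: "((\<lambda>y. 2 * harm (K (sqrt y)) - harm (K y) :: real) \<longlongrightarrow> euler_mascheroni) at_top"
proof -
  have s: "filterlim sqrt at_top at_top" by (rule sqrt_at_top)
  have a: "((\<lambda>y. harm (K (sqrt y)) - ln (sqrt y)) \<longlongrightarrow> euler_mascheroni) at_top"
    using filterlim_compose[OF harm_K_lim s] by simp
  have "((\<lambda>y. 2 * (harm (K (sqrt y)) - ln (sqrt y)) - (harm (K y) - ln y)) \<longlongrightarrow>
          2 * euler_mascheroni - euler_mascheroni) at_top"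
    by (intro tendsto_intros a harm_K_lim)
  moreover have "eventually (\<lambda>y. 2 * (harm (K (sqrt y)) - ln (sqrt y)) - (harm (K y) - ln y)
        = 2 * harm (K (sqrt y)) - harm (K y)) at_top"
    using eventually_gt_at_top[of "0::real"]
    by eventually_elim (simp add: ln_sqrt algebra_simps)
  ultimately show ?thesis using Lim_transform_eventually by fastforce
qed

lemma Zeq:
  assumes q: "q \<ge> 1"
  shows "real_of_int (Z F q) = 2 * real (card {d. 0<d \<and> d dvd q \<and> real d < sqrt (F q)})
            - real (card {d. 0<d \<and> d dvd q \<and> real d < F q})"
proof -
  define A where "A = {d. 0<d \<and> d dvd q \<and> real d < sqrt (F q)}"
  define C where "C = {d. 0<d \<and> d dvd q \<and> real d < F q}"
  have fin: "finite C" unfolding C_def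
    by (rule finite_subset[of _ "{..q}"]) (use q in \<open>auto dest: dvd_imp_le\<close>)
  have sub: "A \<subseteq> C"
  proof
    fix d assume "d \<in> A"
    then have d: "0 < d" "d dvd q" "real d < sqrt (F q)" unfolding A_def by auto
    have "0 < real d" using d by simp
    then have "0 < sqrt (F q)" using d by linarith
    then have Fp: "F q > 0" by simp
    have "real d * real d < sqrt (F q) * sqrt (F q)"
      using d Fp by (intro mult_strict_mono) auto
    also have "\<dots> = F q" using Fp by simp
    finally have "real d * real d < F q" .
    moreover have "real d \<le> real d * real d" using d by simp
    ultimately have "real d < F q" by linarith
    then show "d \<in> C" using d unfolding C_def by auto
  qed
  have "{d::nat. d > 0 \<and> d dvd q \<and> sqrt (F q) \<le> real d \<and> real d < F q} = C - A"
    unfolding A_def C_def by auto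
  then have "Z F q = int (card A) - int (card (C - A))" unfolding Z_def A_def by simp
  also have "card (C - A) = card C - card A" using fin sub by (simp add: card_Diff_subset finite_subset)
  also have "int (card C - card A) = int (card C) - int (card A)"
    using card_mono[OF fin sub] by simp
  finally have "Z F q = 2 * int (card A) - int (card C)" by simp
  then show ?thesis unfolding A_def C_def by simp
qed

lemma sqrt_le_self': "y \<ge> 1 \<Longrightarrow> sqrt y \<le> (y::real)"
proof -
  assume y: "y \<ge> 1"
  then have s: "sqrt y \<ge> 1" by simp
  have "sqrt y * 1 \<le> sqrt y * sqrt y" using s by (intro mult_left_mono) auto
  also have "\<dots> = y" using y by simp
  finally show ?thesis by simp
qed

theorem theorem1:
  fixes F :: "nat \<Rightarrow> real"
  assumes mono: "\<And>m n. 1 \<le> m \<Longrightarrow> m \<le> n \<Longrightarrow> F m \<le> F n"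
    and inf: "filterlim F at_top sequentially"
    and ratio: "filterlim (\<lambda>q. real q / F q) at_top sequentially"
  shows "(\<lambda>B. (\<Sum>q=1..B. real_of_int (Z F q)) / real B) \<longlonglongrightarrow> euler_mascheroni"
proof -
  define a1 where "a1 q = real (card {d. 0<d \<and> d dvd q \<and> real d < sqrt (F q)}) - harm (K (sqrt (F q)))" for q
  define a2 where "a2 q = real (card {d. 0<d \<and> d dvd q \<and> real d < F q}) - harm (K (F q))" for q
  define g where "g q = 2 * harm (K (sqrt (F q))) - (harm (K (F q)) :: real)" for q
  have msq: "sqrt (F m) \<le> sqrt (F n)" if "1 \<le> m" "m \<le> n" for m n
    using mono[OF that] by simp
  have b1: "\<bar>\<Sum>q=1..B. a1 q\<bar> \<le> max 0 (sqrt (F B))" if "B \<ge> 1" for B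
    unfolding a1_def by (rule G[where T="\<lambda>q. sqrt (F q)", OF msq that])
  have b2: "\<bar>\<Sum>q=1..B. a2 q\<bar> \<le> max 0 (F B)" if "B \<ge> 1" for B
    unfolding a2_def by (rule G[where T=F, OF mono that])
  have FB: "(\<lambda>B. F B / real B) \<longlonglongrightarrow> 0"
    using tendsto_inverse_0_at_top[OF ratio] by simp
  have Fge1: "eventually (\<lambda>B. F B \<ge> 1) sequentially"
    using inf unfolding filterlim_at_top by blast
  have l2: "(\<lambda>B. (\<Sum>q=1..B. a2 q) / real B) \<longlonglongrightarrow> 0"
  proof (rule Lim_null_comparison[OF _ tendsto_rabs_zero[OF FB]])
    show "eventually (\<lambda>B. norm ((\<Sum>q=1..B. a2 q) / real B) \<le> \<bar>F B / real B\<bar>) sequentially"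
      using Fge1 eventually_ge_at_top[of 1]
    proof eventually_elim
      case (elim B)
      have "\<bar>\<Sum>q=1..B. a2 q\<bar> \<le> \<bar>F B\<bar>" using b2[OF elim(2)] elim by simp
      then show ?case using elim by (simp add: abs_divide divide_right_mono)
    qed
  qed
  have l1: "(\<lambda>B. (\<Sum>q=1..B. a1 q) / real B) \<longlonglongrightarrow> 0"
  proof (rule Lim_null_comparison[OF _ tendsto_rabs_zero[OF FB]])
    show "eventually (\<lambda>B. norm ((\<Sum>q=1..B. a1 q) / real B) \<le> \<bar>F B / real B\<bar>) sequentially"
      using Fge1 eventually_ge_at_top[of 1]
    proof eventually_elim
      case (elim B)
      have "sqrt (F B) \<le> F B" using elim by (intro sqrt_le_self') simp
      then have "\<bar>\<Sum>q=1..B. a1 q\<bar> \<le> \<bar>F B\<bar>" using b1[OF elim(2)] elim by simp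
      then show ?case using elim by (simp add: abs_divide divide_right_mono)
    qed
  qed
  have gl: "g \<longlonglongrightarrow> euler_mascheroni"
    unfolding g_def using filterlim_compose[OF g_lim inf] by simp
  have lim: "(\<lambda>B. 2 * ((\<Sum>q=1..B. a1 q) / real B) - (\<Sum>q=1..B. a2 q) / real B
      + (\<Sum>q=1..B. g q) / real B) \<longlonglongrightarrow> 2 * 0 - 0 + euler_mascheroni"
    by (intro tendsto_intros l1 l2 cesaro gl)
  have "eventually (\<lambda>B. 2 * ((\<Sum>q=1..B. a1 q) / real B) - (\<Sum>q=1..B. a2 q) / real B
      + (\<Sum>q=1..B. g q) / real B = (\<Sum>q=1..B. real_of_int (Z F q)) / real B) sequentially"
    using eventually_ge_at_top[of 1]
  proof eventually_elim
    case (elim B)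
    have "(\<Sum>q=1..B. real_of_int (Z F q)) = (\<Sum>q=1..B. 2 * a1 q - a2 q + g q)"
      by (intro sum.cong) (auto simp: Zeq a1_def a2_def g_def)
    also have "\<dots> = 2 * (\<Sum>q=1..B. a1 q) - (\<Sum>q=1..B. a2 q) + (\<Sum>q=1..B. g q)"
      by (simp add: sum.distrib sum_subtractf sum_distrib_left)
    finally have e: "(\<Sum>q=1..B. real_of_int (Z F q)) = 2 * (\<Sum>q=1..B. a1 q) - (\<Sum>q=1..B. a2 q) + (\<Sum>q=1..B. g q)" .
    show ?case unfolding e by (simp add: add_divide_distrib diff_divide_distrib)
  qed
  from Lim_transform_eventually[OF lim this] show ?thesis by simp
qed

end
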